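(* Let $u$ be a quasi-definite linear functional on $\mathbb C[\boldsymbol x]$, $\boldsymbol\gamma:I\to\mathbb R^D$ a smooth curve on an interval $I\subset\mathbb R$, $w:I\to\mathbb C$ a weight, $v$ the linear functional $\langle v,P\rangle=\int_IP(\boldsymbol\gamma(s))w(s)\,ds$, and $\hat u=u+v$, assumed quasi-definite. Put $\pi_{[m]}(t)=P_{[m]}(\boldsymbol\gamma(t))$, $\hat\pi_{[n]}(t)=\hat P_{[n]}(\boldsymbol\gamma(t))$ and $A_{[l],[m]}=\int_I\pi_{[l]}(s)\pi_{[m]}(s)^\top w(s)\,ds$. Then for $n\ge1$ $$\hat\pi_{[n]}(t)=\Theta_*\begin{pmatrix}H_{[0]}+A_{[0],[0]}&\cdots&A_{[0],[n-1]}&\pi_{[0]}(t)\\ \vdots&\ddots&\vdots&\vdots\\ A_{[n-1],[0]}&\cdots&H_{[n-1]}+A_{[n-1],[n-1]}&\pi_{[n-1]}(t)\\ A_{[n],[0]}&\cdots&A_{[n],[n-1]}&\pi_{[n]}(t)\end{pmatrix},$$ and $$\hat P_{[n]}(\boldsymbol x)=P_{[n]}(\boldsymbol x)-\int_I\hat\pi_{[n]}(s)K_{n-1}(\boldsymbol\gamma(s),\boldsymbol x)w(s)\,ds,\qquad \hat H_{[n]}=H_{[n]}+\int_I\hat\pi_{[n]}(s)\pi_{[n]}(s)^\top w(s)\,ds.$$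
   Context: Multi-indices ordered by graded lexicographic order; $\chi(\boldsymbol x)$ the semi-infinite vector of monomials with blocks $\chi_{[k]}$. For a linear functional $u$ on $\mathbb C[\boldsymbol x]$ (applied entrywise), moment matrix $G=\langle u,\chi\chi^\top\rangle$; quasi-definite: all block truncations nonsingular; then $G=S^{-1}HS^{-\top}$ with $S$ block lower unitriangular and $H$ block diagonal with blocks $H_{[k]}$; $P=S\chi$ with blocks $P_{[k]}$ are the monic orthogonal polynomials; hats refer to $\hat u$. $K_{n-1}(\boldsymbol x,\boldsymbol y)=\sum_{m=0}^{n-1}P_{[m]}(\boldsymbol x)^\top H_{[m]}^{-1}P_{[m]}(\boldsymbol y)$. Last quasi-determinant: $\Theta_*\begin{pmatrix}A&B\\C&D\end{pmatrix}=D-CA^{-1}B$, last block row/column being the last displayed ones. *)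

theory Defs
  imports "HOL-Analysis.Analysis" "Jordan_Normal_Form.Determinant"
begin

text \<open>Multi-indices are lists of naturals of length D. mi D k lists the
multi-indices of total degree k in lexicographic order (x1 > x2 > ... > xD),
so that chi_[k] = (x^alpha) for alpha in mi D k.\<close>

fun mi :: "nat \<Rightarrow> nat \<Rightarrow> nat list list" where
  "mi 0 k = (if k = 0 then [[]] else [])"
| "mi (Suc d) k = concat (map (\<lambda>i. map (Cons (k - i)) (mi d i)) [0..<Suc k])"

definition bsz :: "nat \<Rightarrow> nat \<Rightarrow> nat" where
  "bsz D k = length (mi D k)"

definition madd :: "nat list \<Rightarrow> nat list \<Rightarrow> nat list" where
  "madd a b = map2 (+) a b"

definition monev :: "nat list \<Rightarrow> (nat \<Rightarrow> complex) \<Rightarrow> complex" where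
  "monev a x = (\<Prod>i<length a. x i ^ (a ! i))"

text \<open>Flattened indexing of the blocks 0..n-1: list of (block, local index).\<close>
definition idx :: "nat \<Rightarrow> nat \<Rightarrow> (nat \<times> nat) list" where
  "idx D n = concat (map (\<lambda>k. map (\<lambda>a. (k, a)) [0..<bsz D k]) [0..<n])"

definition off :: "nat \<Rightarrow> nat \<Rightarrow> nat" where
  "off D n = (\<Sum>k<n. bsz D k)"

text \<open>A linear functional on C[x] is determined by its moments mom alpha = <u, x^alpha>.\<close>

definition Gblk :: "(nat list \<Rightarrow> complex) \<Rightarrow> nat \<Rightarrow> nat \<Rightarrow> nat \<Rightarrow> complex mat" where
  "Gblk mom D k l = mat (bsz D k) (bsz D l)
      (\<lambda>(a, b). mom (madd (mi D k ! a) (mi D l ! b)))"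

text \<open>Block truncation G_[0..n] (blocks 0..n).\<close>
definition Gtrunc :: "(nat list \<Rightarrow> complex) \<Rightarrow> nat \<Rightarrow> nat \<Rightarrow> complex mat" where
  "Gtrunc mom D n = mat (off D (Suc n)) (off D (Suc n))
      (\<lambda>(r, c). case idx D (Suc n) ! r of (k, a) \<Rightarrow>
                 (case idx D (Suc n) ! c of (l, b) \<Rightarrow>
                    mom (madd (mi D k ! a) (mi D l ! b))))"

definition quasi_definite :: "(nat list \<Rightarrow> complex) \<Rightarrow> nat \<Rightarrow> bool" where
  "quasi_definite mom D \<longleftrightarrow> (\<forall>n. det (Gtrunc mom D n) \<noteq> 0)"

text \<open>G = S^{-1} H S^{-T} with S block lower unitriangular (blocks S k j, j \<le> k,
S k k = identity) and H block diagonal (blocks H k); equivalently S G S^T = H,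
written blockwise/entrywise.\<close>
definition block_LDL ::
  "(nat list \<Rightarrow> complex) \<Rightarrow> nat \<Rightarrow> (nat \<Rightarrow> nat \<Rightarrow> complex mat) \<Rightarrow> (nat \<Rightarrow> complex mat) \<Rightarrow> bool" where
  "block_LDL mom D S H \<longleftrightarrow>
     (\<forall>k. S k k = 1\<^sub>m (bsz D k)) \<and>
     (\<forall>k j. j \<le> k \<longrightarrow> S k j \<in> carrier_mat (bsz D k) (bsz D j)) \<and>
     (\<forall>k. H k \<in> carrier_mat (bsz D k) (bsz D k)) \<and>
     (\<forall>k l a b. a < bsz D k \<longrightarrow> b < bsz D l \<longrightarrow>
        (\<Sum>i\<le>k. \<Sum>j\<le>l. \<Sum>c<bsz D i. \<Sum>d<bsz D j.
            S k i $$ (a, c) * Gblk mom D i j $$ (c, d) * S l j $$ (b, d))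
        = (if k = l then H k $$ (a, b) else 0))"

text \<open>P_[k](x) = sum_{j \<le> k} S_[k],[j] chi_[j](x), as a column (bsz D k x 1 matrix).\<close>
definition Pb :: "nat \<Rightarrow> (nat \<Rightarrow> nat \<Rightarrow> complex mat) \<Rightarrow> nat \<Rightarrow> (nat \<Rightarrow> complex) \<Rightarrow> complex mat" where
  "Pb D S k x = mat (bsz D k) 1
      (\<lambda>(a, _). \<Sum>j\<le>k. \<Sum>b<bsz D j. S k j $$ (a, b) * monev (mi D j ! b) x)"

definition mat_inv :: "complex mat \<Rightarrow> complex mat" where
  "mat_inv A = (1 / det A) \<cdot>\<^sub>m adj_mat A"

text \<open>Christoffel--Darboux kernel K_{n-1}(y,x) = sum_{m<n} P_[m](y)^T H_[m]^{-1} P_[m](x).\<close>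
definition Kern :: "nat \<Rightarrow> (nat \<Rightarrow> nat \<Rightarrow> complex mat) \<Rightarrow> (nat \<Rightarrow> complex mat) \<Rightarrow> nat
     \<Rightarrow> (nat \<Rightarrow> complex) \<Rightarrow> (nat \<Rightarrow> complex) \<Rightarrow> complex" where
  "Kern D S H n y x = (\<Sum>m<n. (transpose_mat (Pb D S m y) * mat_inv (H m) * Pb D S m x) $$ (0, 0))"

text \<open>Theta_star M p q = D - C A^{-1} B, where the last block row of M has p rows
and the last block column has q columns.\<close>
definition Theta_star :: "complex mat \<Rightarrow> nat \<Rightarrow> nat \<Rightarrow> complex mat" where
  "Theta_star M p q = (case split_block M (dim_row M - p) (dim_col M - q) of
      (A, B, C, Dm) \<Rightarrow> Dm - C * mat_inv A * B)"

definition smooth_curve :: "nat \<Rightarrow> real set \<Rightarrow> (real \<Rightarrow> nat \<Rightarrow> real) \<Rightarrow> bool" where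
  "smooth_curve D I \<gamma> \<longleftrightarrow>
     (\<forall>i<D. \<forall>k. \<forall>s\<in>I. ((deriv ^^ k) (\<lambda>r. \<gamma> r i)) differentiable (at s))"

definition cpt :: "(real \<Rightarrow> nat \<Rightarrow> real) \<Rightarrow> real \<Rightarrow> nat \<Rightarrow> complex" where
  "cpt \<gamma> s = (\<lambda>i. complex_of_real (\<gamma> s i))"

end

theory Submission
  imports Defs
begin


definition BB :: "nat \<Rightarrow> nat \<Rightarrow> (nat \<times> nat) set" where
  "BB D m = Sigma {..<m} (\<lambda>j. {..<bsz D j})"

definition suppB :: "nat \<Rightarrow> nat \<Rightarrow> (nat \<times> nat \<Rightarrow> complex) \<Rightarrow> bool" where
  "suppB D m p \<longleftrightarrow> (\<forall>i. p i \<noteq> 0 \<longrightarrow> i \<in> BB D m)"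

definition lc :: "nat \<Rightarrow> nat \<Rightarrow> (nat \<times> nat \<Rightarrow> complex) \<Rightarrow> (nat \<times> nat \<Rightarrow> nat \<times> nat \<Rightarrow> complex)
   \<Rightarrow> nat \<times> nat \<Rightarrow> complex" where
  "lc D m x t = (\<lambda>i. \<Sum>j\<in>BB D m. x j * t j i)"

definition UT :: "nat \<Rightarrow> (nat \<times> nat \<Rightarrow> nat \<times> nat \<Rightarrow> complex) \<Rightarrow> bool" where
  "UT D t \<longleftrightarrow> (\<forall>k a. a < bsz D k \<longrightarrow> suppB D (Suc k) (t (k,a)) \<and>
      (\<forall>b<bsz D k. t (k,a) (k,b) = (if a = b then 1 else 0)))"

lemma finite_BB[simp]: "finite (BB D m)"
  unfolding BB_def by auto

lemma mem_BB: "(i \<in> BB D m) \<longleftrightarrow> fst i < m \<and> snd i < bsz D (fst i)"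
  unfolding BB_def by (cases i) auto

lemma mem_BB_pair[simp]: "((k,b) \<in> BB D m) \<longleftrightarrow> k < m \<and> b < bsz D k"
  unfolding BB_def by auto

lemma BB_0[simp]: "BB D 0 = {}"
  unfolding BB_def by auto

lemma sum_BB: "(\<Sum>i\<in>BB D m. f i) = (\<Sum>j<m. \<Sum>c<bsz D j. f (j,c))"
  unfolding BB_def by (subst sum.Sigma) auto

lemma sum_BB_Suc: "(\<Sum>i\<in>BB D (Suc m). f i) = (\<Sum>i\<in>BB D m. f i) + (\<Sum>c<bsz D m. f (m,c))"
  by (simp add: sum_BB)

lemma BB_mono: "m \<le> m' \<Longrightarrow> BB D m \<subseteq> BB D m'"
  by (auto simp: mem_BB)

lemma suppB_mono: "suppB D m p \<Longrightarrow> m \<le> m' \<Longrightarrow> suppB D m' p"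
  unfolding suppB_def using BB_mono by blast

lemma lc_Suc: "lc D (Suc m) x t i = lc D m x t i + (\<Sum>c<bsz D m. x (m,c) * t (m,c) i)"
  unfolding lc_def by (rule sum_BB_Suc)

lemma span_lemma:
  assumes ut: "UT D t"
  shows "suppB D m p \<Longrightarrow> \<exists>x. p = lc D m x t"
proof (induction m arbitrary: p)
  case 0
  then have "p = (\<lambda>_. 0)" unfolding suppB_def by auto
  then show ?case by (intro exI[of _ "\<lambda>_. 0"]) (auto simp: lc_def)
next
  case (Suc m)
  define p' where "p' = (\<lambda>i. p i - (\<Sum>c<bsz D m. p (m,c) * t (m,c) i))"
  have "suppB D m p'"
    unfolding suppB_def
  proof (intro allI impI, rule ccontr)
    fix i assume nz: "p' i \<noteq> 0" and ni: "i \<notin> BB D m"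
    obtain k b where i: "i = (k,b)" by (cases i)
    show False
    proof (cases "i \<in> BB D (Suc m)")
      case False
      then have "p i = 0" using Suc.prems unfolding suppB_def by blast
      moreover have "t (m,c) i = 0" if "c < bsz D m" for c
        using ut that False unfolding UT_def suppB_def by blast
      ultimately show False using nz unfolding p'_def by simp
    next
      case True
      with ni i have km: "k = m" by auto
      with True i have b: "b < bsz D m" by auto
      have "(\<Sum>c<bsz D m. p (m,c) * t (m,c) i) = (\<Sum>c<bsz D m. if c = b then p (m,c) else 0)"
        using ut b unfolding UT_def i km by (intro sum.cong) auto
      also have "\<dots> = p i" using b i km by simp
      finally show False using nz unfolding p'_def by simp
    qed
  qed
  from Suc.IH[OF this] obtain x where x: "p' = lc D m x t" by blast
  define x' where "x' = (\<lambda>i. if fst i = m then p i else x i)"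
  have "lc D (Suc m) x' t i = p i" for i
  proof -
    have "lc D m x' t i = lc D m x t i"
      unfolding lc_def x'_def by (intro sum.cong) auto
    moreover have "(\<Sum>c<bsz D m. x' (m,c) * t (m,c) i) = (\<Sum>c<bsz D m. p (m,c) * t (m,c) i)"
      unfolding x'_def by simp
    moreover have "lc D m x t i = p' i" using x by simp
    ultimately show ?thesis unfolding lc_Suc p'_def by simp
  qed
  then show ?case by (intro exI[of _ x']) auto
qed

lemma indep_lemma:
  assumes ut: "UT D t"
  shows "lc D m x t = (\<lambda>_. 0) \<Longrightarrow> i \<in> BB D m \<Longrightarrow> x i = 0"
proof (induction m arbitrary: i)
  case 0
  then show ?case by simp
next
  case (Suc m)
  have top: "x (m,b) = 0" if b: "b < bsz D m" for b
  proof -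
    have "lc D m x t (m,b) = 0"
      unfolding lc_def
    proof (intro sum.neutral ballI)
      fix j assume j: "j \<in> BB D m"
      obtain k c where jj: "j = (k,c)" by (cases j)
      have "suppB D (Suc k) (t (k,c))" using ut j jj unfolding UT_def by auto
      moreover have "(m,b) \<notin> BB D (Suc k)" using j jj by simp
      ultimately have "t j (m,b) = 0" using jj unfolding suppB_def by blast
      then show "x j * t j (m,b) = 0" by simp
    qed
    moreover have "(\<Sum>c<bsz D m. x (m,c) * t (m,c) (m,b)) = (\<Sum>c<bsz D m. if c = b then x (m,c) else 0)"
      using ut b unfolding UT_def by (intro sum.cong) auto
    moreover have "lc D (Suc m) x t (m,b) = 0" using Suc.prems by simp
    ultimately show ?thesis using b unfolding lc_Suc by simp
  qed
  have "lc D m x t = (\<lambda>_. 0)"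
  proof
    fix j
    have "lc D (Suc m) x t j = 0" using Suc.prems by simp
    then show "lc D m x t j = 0" unfolding lc_Suc using top by simp
  qed
  then show ?case using Suc top by (cases i) (auto simp: less_Suc_eq)
qed

definition mon :: "nat \<Rightarrow> nat \<times> nat \<Rightarrow> nat list" where
  "mon D i = mi D (fst i) ! snd i"

definition gm :: "(nat list \<Rightarrow> complex) \<Rightarrow> nat \<Rightarrow> nat \<times> nat \<Rightarrow> nat \<times> nat \<Rightarrow> complex" where
  "gm mom D i j = mom (madd (mon D i) (mon D j))"

definition bf :: "nat \<Rightarrow> nat \<Rightarrow> (nat \<times> nat \<Rightarrow> nat \<times> nat \<Rightarrow> complex) \<Rightarrow> (nat \<times> nat \<Rightarrow> complex)
    \<Rightarrow> (nat \<times> nat \<Rightarrow> complex) \<Rightarrow> complex" where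
  "bf D N g p q = (\<Sum>i\<in>BB D N. \<Sum>j\<in>BB D N. p i * g i j * q j)"

definition sv :: "nat \<Rightarrow> (nat \<Rightarrow> nat \<Rightarrow> complex mat) \<Rightarrow> nat \<times> nat \<Rightarrow> nat \<times> nat \<Rightarrow> complex" where
  "sv D S ka jb = (if fst jb \<le> fst ka \<and> snd jb < bsz D (fst jb)
      then S (fst ka) (fst jb) $$ (snd ka, snd jb) else 0)"

lemma bf_lc_left: "bf D N g (lc D m x t) q = (\<Sum>j\<in>BB D m. x j * bf D N g (t j) q)"
proof -
  have "bf D N g (lc D m x t) q = (\<Sum>i\<in>BB D N. \<Sum>k\<in>BB D N. \<Sum>j\<in>BB D m. x j * (t j i * g i k * q k))"
    unfolding bf_def lc_def by (simp add: sum_distrib_right sum_distrib_left mult.assoc mult.left_commute)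
  also have "\<dots> = (\<Sum>i\<in>BB D N. \<Sum>j\<in>BB D m. \<Sum>k\<in>BB D N. x j * (t j i * g i k * q k))"
    by (intro sum.cong refl sum.swap)
  also have "\<dots> = (\<Sum>j\<in>BB D m. \<Sum>i\<in>BB D N. \<Sum>k\<in>BB D N. x j * (t j i * g i k * q k))"
    by (rule sum.swap)
  also have "\<dots> = (\<Sum>j\<in>BB D m. x j * bf D N g (t j) q)"
    unfolding bf_def by (simp add: sum_distrib_left)
  finally show ?thesis .
qed

lemma bf_lc_right: "bf D N g p (lc D m x t) = (\<Sum>j\<in>BB D m. x j * bf D N g p (t j))"
proof -
  have "bf D N g p (lc D m x t) = (\<Sum>i\<in>BB D N. \<Sum>k\<in>BB D N. \<Sum>j\<in>BB D m. x j * (p i * g i k * t j k))"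
    unfolding bf_def lc_def by (simp add: sum_distrib_right sum_distrib_left mult.assoc mult.left_commute)
  also have "\<dots> = (\<Sum>i\<in>BB D N. \<Sum>j\<in>BB D m. \<Sum>k\<in>BB D N. x j * (p i * g i k * t j k))"
    by (intro sum.cong refl sum.swap)
  also have "\<dots> = (\<Sum>j\<in>BB D m. \<Sum>i\<in>BB D N. \<Sum>k\<in>BB D N. x j * (p i * g i k * t j k))"
    by (rule sum.swap)
  also have "\<dots> = (\<Sum>j\<in>BB D m. x j * bf D N g p (t j))"
    unfolding bf_def by (simp add: sum_distrib_left)
  finally show ?thesis .
qed

lemma bf_add_g: "bf D N (\<lambda>i j. g1 i j + g2 i j) p q = bf D N g1 p q + bf D N g2 p q"
  unfolding bf_def by (simp add: algebra_simps sum.distrib)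

lemma bf_add_left: "bf D N g (\<lambda>i. p i + p' i) q = bf D N g p q + bf D N g p' q"
  unfolding bf_def by (simp add: algebra_simps sum.distrib)

lemma bf_add_right: "bf D N g p (\<lambda>i. q i + q' i) = bf D N g p q + bf D N g p q'"
  unfolding bf_def by (simp add: algebra_simps sum.distrib)

lemma suppB_sv: "k < m \<Longrightarrow> suppB D m (sv D S (k,a))"
  unfolding suppB_def sv_def by (auto simp: mem_BB)

lemma suppB_sv': "fst j < m \<Longrightarrow> suppB D m (sv D S j)"
  unfolding suppB_def sv_def by (auto simp: mem_BB)

lemma UT_sv:
  assumes "block_LDL mom D S H"
  shows "UT D (sv D S)"
  unfolding UT_def
proof (intro allI impI)
  fix k a assume a: "a < bsz D k"
  have "suppB D (Suc k) (sv D S (k, a))" by (rule suppB_sv) simp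
  moreover have "\<forall>b<bsz D k. sv D S (k, a) (k, b) = (if a = b then 1 else 0)"
    using assms a unfolding block_LDL_def sv_def by auto
  ultimately show "suppB D (Suc k) (sv D S (k, a)) \<and> (\<forall>b<bsz D k. sv D S (k, a) (k, b) = (if a = b then 1 else 0))" by blast
qed

lemma sum_upto_restrict:
  assumes "(k::nat) < N" "\<And>i. k < i \<Longrightarrow> i < N \<Longrightarrow> f i = 0"
  shows "(\<Sum>i<N. f i) = (\<Sum>i\<le>k. f i)"
proof (rule sum.mono_neutral_right)
  show "\<forall>i\<in>{..<N} - {..k}. f i = 0"
  proof
    fix i assume "i \<in> {..<N} - {..k}"
    then have "k < i" "i < N" by auto
    then show "f i = 0" by (rule assms(2))
  qed
qed (use assms in auto)

lemma LDL_bf: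
  assumes L: "block_LDL mom D S H" and k: "k < N" and l: "l < N"
    and a: "a < bsz D k" and b: "b < bsz D l"
  shows "bf D N (gm mom D) (sv D S (k,a)) (sv D S (l,b)) = (if k = l then H k $$ (a, b) else 0)"
proof -
  let ?f = "\<lambda>i j c d. sv D S (k,a) (i,c) * gm mom D (i,c) (j,d) * sv D S (l,b) (j,d)"
  have "bf D N (gm mom D) (sv D S (k,a)) (sv D S (l,b)) = (\<Sum>i<N. \<Sum>c<bsz D i. \<Sum>j<N. \<Sum>d<bsz D j. ?f i j c d)"
    unfolding bf_def sum_BB by (simp add: sum_distrib_left)
  also have "\<dots> = (\<Sum>i<N. \<Sum>j<N. \<Sum>c<bsz D i. \<Sum>d<bsz D j. ?f i j c d)"
    by (intro sum.cong refl sum.swap)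
  also have "\<dots> = (\<Sum>i\<le>k. \<Sum>j<N. \<Sum>c<bsz D i. \<Sum>d<bsz D j. ?f i j c d)"
    by (rule sum_upto_restrict[OF k]) (simp add: sv_def)
  also have "\<dots> = (\<Sum>i\<le>k. \<Sum>j\<le>l. \<Sum>c<bsz D i. \<Sum>d<bsz D j. ?f i j c d)"
    by (intro sum.cong refl sum_upto_restrict[OF l]) (simp add: sv_def)
  also have "\<dots> = (\<Sum>i\<le>k. \<Sum>j\<le>l. \<Sum>c<bsz D i. \<Sum>d<bsz D j.
            S k i $$ (a, c) * Gblk mom D i j $$ (c, d) * S l j $$ (b, d))"
    by (intro sum.cong refl) (simp add: sv_def Gblk_def gm_def mon_def)
  also have "\<dots> = (if k = l then H k $$ (a, b) else 0)"
    using L a b unfolding block_LDL_def by blast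
  finally show ?thesis .
qed


lemma idx_Suc: "idx D (Suc n) = idx D n @ map (\<lambda>a. (n, a)) [0..<bsz D n]"
  unfolding idx_def by simp

lemma length_idx[simp]: "length (idx D n) = off D n"
  by (induction n) (auto simp: idx_Suc off_def, simp add: idx_def)

lemma set_idx: "set (idx D n) = BB D n"
  by (induction n) (auto simp: idx_Suc mem_BB less_Suc_eq, auto simp: idx_def)

lemma distinct_idx: "distinct (idx D n)"
proof (induction n)
  case 0 then show ?case by (simp add: idx_def)
next
  case (Suc n)
  have "set (idx D n) \<inter> set (map (\<lambda>a. (n, a)) [0..<bsz D n]) = {}"
    unfolding set_idx by (auto simp: mem_BB)
  then show ?case using Suc by (simp add: idx_Suc distinct_map inj_on_def)
qed

lemma idx_Suc_lo: "r < off D n \<Longrightarrow> idx D (Suc n) ! r = idx D n ! r"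
  by (simp add: idx_Suc nth_append)

lemma idx_Suc_hi: "a < bsz D n \<Longrightarrow> idx D (Suc n) ! (off D n + a) = (n, a)"
  by (simp add: idx_Suc nth_append)

lemma bij_idx: "bij_betw ((!) (idx D n)) {..<off D n} (BB D n)"
  by (rule bij_betw_nth) (auto simp: distinct_idx set_idx)

lemma sum_idx: "(\<Sum>r<off D n. f (idx D n ! r)) = (\<Sum>i\<in>BB D n. f i)"
  by (rule sum.reindex_bij_betw[OF bij_idx])

lemma idx_in_BB: "r < off D n \<Longrightarrow> idx D n ! r \<in> BB D n"
  using bij_idx bij_betwE by blast

lemma BB_idx: "i \<in> BB D n \<Longrightarrow> \<exists>r<off D n. idx D n ! r = i"
  by (metis in_set_conv_nth length_idx set_idx)

lemma Gtrunc_entry: "r < off D (Suc m) \<Longrightarrow> c < off D (Suc m) \<Longrightarrow>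
   Gtrunc mom D m $$ (r, c) = gm mom D (idx D (Suc m) ! r) (idx D (Suc m) ! c)"
  unfolding Gtrunc_def gm_def mon_def by (simp split: prod.split)

lemma Gtrunc_lemma:
  assumes qd: "quasi_definite mom D" and sp: "suppB D (Suc m) p"
    and orth: "\<And>i. i \<in> BB D (Suc m) \<Longrightarrow> (\<Sum>j\<in>BB D (Suc m). gm mom D i j * p j) = 0"
  shows "p = (\<lambda>_. 0)"
proof -
  let ?n = "off D (Suc m)"
  let ?A = "Gtrunc mom D m"
  let ?ix = "idx D (Suc m)"
  define v where "v = vec ?n (\<lambda>c. p (?ix ! c))"
  have A: "?A \<in> carrier_mat ?n ?n" unfolding Gtrunc_def by simp
  have "?A *\<^sub>v v = 0\<^sub>v ?n"
  proof (rule eq_vecI)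
    fix r assume r: "r < dim_vec (0\<^sub>v ?n :: complex vec)"
    then have r: "r < ?n" by simp
    have "(?A *\<^sub>v v) $ r = (\<Sum>c<?n. gm mom D (?ix ! r) (?ix ! c) * p (?ix ! c))"
      using A r unfolding v_def by (simp add: mult_mat_vec_def scalar_prod_def Gtrunc_entry
          atLeast0LessThan)
    also have "\<dots> = (\<Sum>j\<in>BB D (Suc m). gm mom D (?ix ! r) j * p j)"
      by (rule sum_idx)
    also have "\<dots> = 0" by (rule orth[OF idx_in_BB[OF r]])
    finally show "(?A *\<^sub>v v) $ r = 0\<^sub>v ?n $ r" using r by simp
  qed (use A in simp)
  moreover have "det ?A \<noteq> 0" using qd unfolding quasi_definite_def by blast
  moreover have "v \<in> carrier_vec ?n" unfolding v_def by simp
  ultimately have v0: "v = 0\<^sub>v ?n"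
    using det_0_iff_vec_prod_zero_field[OF A] by blast
  show ?thesis
  proof
    fix i
    show "p i = 0"
    proof (cases "i \<in> BB D (Suc m)")
      case True
      then obtain r where r: "r < ?n" "?ix ! r = i" using BB_idx by blast
      have "v $ r = 0" using v0 r by simp
      then show ?thesis using r unfolding v_def by simp
    next
      case False then show ?thesis using sp unfolding suppB_def by blast
    qed
  qed
qed


definition ev :: "nat \<Rightarrow> nat \<times> nat \<Rightarrow> nat \<times> nat \<Rightarrow> complex" where
  "ev D i = (\<lambda>j. if j = i then 1 else 0)"

lemma bf_ev: "i \<in> BB D N \<Longrightarrow> bf D N g (ev D i) p = (\<Sum>j\<in>BB D N. g i j * p j)"
  unfolding bf_def ev_def by (simp add: if_distrib if_distribR sum.If_cases Int_absorb2 cong: if_cong)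

lemma suppB_ev: "i \<in> BB D m \<Longrightarrow> suppB D m (ev D i)"
  unfolding suppB_def ev_def by auto

lemma orth_ext:
  assumes ut: "UT D t" and sq: "suppB D m q" and o: "\<And>j. j \<in> BB D m \<Longrightarrow> bf D N g p (t j) = 0"
  shows "bf D N g p q = 0"
proof -
  obtain x where x: "q = lc D m x t" using span_lemma[OF ut sq] by blast
  show ?thesis unfolding x bf_lc_right using o by simp
qed

lemma orth_ext_left:
  assumes ut: "UT D t" and sq: "suppB D m q" and o: "\<And>j. j \<in> BB D m \<Longrightarrow> bf D N g (t j) p = 0"
  shows "bf D N g q p = 0"
proof -
  obtain x where x: "q = lc D m x t" using span_lemma[OF ut sq] by blast
  show ?thesis unfolding x bf_lc_left using o by simp
qed

lemma nondeg:
  assumes qd: "quasi_definite mom D" and ut: "UT D t" and mN: "Suc m \<le> N"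
    and sp: "suppB D (Suc m) p"
    and o: "\<And>i. i \<in> BB D (Suc m) \<Longrightarrow> bf D N (gm mom D) (t i) p = 0"
  shows "p = (\<lambda>_. 0)"
proof (rule Gtrunc_lemma[OF qd sp])
  fix i assume i: "i \<in> BB D (Suc m)"
  have iN: "i \<in> BB D N" using i BB_mono[OF mN] by blast
  have "bf D N (gm mom D) (ev D i) p = 0"
    by (rule orth_ext_left[OF ut suppB_ev[OF i]]) (rule o)
  then have "(\<Sum>j\<in>BB D N. gm mom D i j * p j) = 0" using bf_ev[OF iN] by simp
  moreover have "(\<Sum>j\<in>BB D N. gm mom D i j * p j) = (\<Sum>j\<in>BB D (Suc m). gm mom D i j * p j)"
  proof (rule sum.mono_neutral_right)
    show "\<forall>j\<in>BB D N - BB D (Suc m). gm mom D i j * p j = 0"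
      using sp unfolding suppB_def by auto
  qed (use BB_mono[OF mN] in auto)
  ultimately show "(\<Sum>j\<in>BB D (Suc m). gm mom D i j * p j) = 0" by simp
qed

lemma length_mi: "l \<in> set (mi d k) \<Longrightarrow> length l = d"
  by (induction d arbitrary: k l) (auto split: if_splits)

lemma length_mon: "i \<in> BB D N \<Longrightarrow> length (mon D i) = D"
  unfolding mon_def by (rule length_mi[of _ D "fst i"]) (auto simp: mem_BB bsz_def)

lemma monev_madd: "length \<alpha> = length \<beta> \<Longrightarrow> monev (madd \<alpha> \<beta>) x = monev \<alpha> x * monev \<beta> x"
  unfolding monev_def madd_def by (simp add: power_add prod.distrib)

definition evp :: "nat \<Rightarrow> nat \<Rightarrow> (nat \<times> nat \<Rightarrow> complex) \<Rightarrow> (nat \<Rightarrow> complex) \<Rightarrow> complex" where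
  "evp D N p x = (\<Sum>i\<in>BB D N. p i * monev (mon D i) x)"

definition mvf :: "real set \<Rightarrow> (real \<Rightarrow> nat \<Rightarrow> real) \<Rightarrow> (real \<Rightarrow> complex) \<Rightarrow> nat list \<Rightarrow> complex" where
  "mvf I \<gamma> w \<alpha> = (LINT s:I|lborel. monev \<alpha> (cpt \<gamma> s) * w s)"

lemma set_integral_sum':
  fixes f :: "'i \<Rightarrow> real \<Rightarrow> complex"
  assumes "finite K" "\<And>k. k \<in> K \<Longrightarrow> set_integrable M A (f k)"
  shows "set_integrable M A (\<lambda>s. \<Sum>k\<in>K. f k s)"
    "(LINT s:A|M. (\<Sum>k\<in>K. f k s)) = (\<Sum>k\<in>K. LINT s:A|M. f k s)"
proof -
  have e: "(\<lambda>x. indicator A x *\<^sub>R (\<Sum>k\<in>K. f k x)) = (\<lambda>x. \<Sum>k\<in>K. indicator A x *\<^sub>R f k x)"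
    by (simp add: scaleR_sum_right)
  show "set_integrable M A (\<lambda>s. \<Sum>k\<in>K. f k s)"
    using assms unfolding set_integrable_def e by (intro Bochner_Integration.integrable_sum) auto
  show "(LINT s:A|M. (\<Sum>k\<in>K. f k s)) = (\<Sum>k\<in>K. LINT s:A|M. f k s)"
    using assms unfolding set_integrable_def set_lebesgue_integral_def e by (intro Bochner_Integration.integral_sum) auto
qed

lemma bf_integral:
  assumes integ: "\<And>\<alpha>. set_integrable lborel I (\<lambda>s. monev \<alpha> (cpt \<gamma> s) * w s)"
  shows "set_integrable lborel I (\<lambda>s. evp D N p (cpt \<gamma> s) * evp D N q (cpt \<gamma> s) * w s)"
    "bf D N (gm (mvf I \<gamma> w) D) p q = (LINT s:I|lborel. evp D N p (cpt \<gamma> s) * evp D N q (cpt \<gamma> s) * w s)"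
proof -
  let ?F = "\<lambda>i j s. p i * q j * (monev (madd (mon D i) (mon D j)) (cpt \<gamma> s) * w s)"
  have eq: "evp D N p (cpt \<gamma> s) * evp D N q (cpt \<gamma> s) * w s = (\<Sum>i\<in>BB D N. \<Sum>j\<in>BB D N. ?F i j s)" for s
  proof -
    have "evp D N p (cpt \<gamma> s) * evp D N q (cpt \<gamma> s) * w s =
       (\<Sum>i\<in>BB D N. \<Sum>j\<in>BB D N. p i * monev (mon D i) (cpt \<gamma> s) * (q j * monev (mon D j) (cpt \<gamma> s)) * w s)"
      unfolding evp_def sum_product by (simp add: sum_distrib_right)
    also have "\<dots> = (\<Sum>i\<in>BB D N. \<Sum>j\<in>BB D N. ?F i j s)"
      by (intro sum.cong refl) (simp add: monev_madd length_mon)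
    finally show ?thesis .
  qed
  have int1: "set_integrable lborel I (?F i j)" for i j
    using integ by (simp add: mult.assoc)
  have int2: "set_integrable lborel I (\<lambda>s. \<Sum>j\<in>BB D N. ?F i j s)" for i
    by (rule set_integral_sum'(1)) (auto intro: int1)
  show "set_integrable lborel I (\<lambda>s. evp D N p (cpt \<gamma> s) * evp D N q (cpt \<gamma> s) * w s)"
    unfolding eq by (rule set_integral_sum'(1)) (auto intro: int2)
  have "(LINT s:I|lborel. evp D N p (cpt \<gamma> s) * evp D N q (cpt \<gamma> s) * w s) =
      (\<Sum>i\<in>BB D N. LINT s:I|lborel. \<Sum>j\<in>BB D N. ?F i j s)"
    unfolding eq by (rule set_integral_sum'(2)) (auto intro: int2)
  also have "\<dots> = (\<Sum>i\<in>BB D N. \<Sum>j\<in>BB D N. LINT s:I|lborel. ?F i j s)"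
    by (intro sum.cong refl set_integral_sum'(2)) (auto intro: int1)
  also have "\<dots> = bf D N (gm (mvf I \<gamma> w) D) p q"
    unfolding bf_def gm_def mvf_def by (intro sum.cong refl) (subst set_integral_mult_right, simp add: ac_simps)
  finally show "bf D N (gm (mvf I \<gamma> w) D) p q = (LINT s:I|lborel. evp D N p (cpt \<gamma> s) * evp D N q (cpt \<gamma> s) * w s)" ..
qed

lemma Pb_evp:
  assumes k: "k < N" and a: "a < bsz D k"
  shows "Pb D S k x $$ (a, 0) = evp D N (sv D S (k,a)) x"
proof -
  have "evp D N (sv D S (k,a)) x = (\<Sum>j<N. \<Sum>b<bsz D j. sv D S (k,a) (j,b) * monev (mi D j ! b) x)"
    unfolding evp_def sum_BB mon_def by simp
  also have "\<dots> = (\<Sum>j\<le>k. \<Sum>b<bsz D j. sv D S (k,a) (j,b) * monev (mi D j ! b) x)"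
    by (rule sum_upto_restrict[OF k]) (simp add: sv_def)
  also have "\<dots> = Pb D S k x $$ (a, 0)"
    unfolding Pb_def using a by (simp add: sv_def)
  finally show ?thesis ..
qed


lemma mat_inv_carrier: assumes "A \<in> carrier_mat k k" shows "mat_inv A \<in> carrier_mat k k"
  unfolding mat_inv_def using adj_mat(1)[OF assms] by auto

lemma mat_inv_right:
  assumes A: "A \<in> carrier_mat k k" and d: "det A \<noteq> 0"
  shows "A * mat_inv A = 1\<^sub>m k"
proof -
  have "A * mat_inv A = (1 / det A) \<cdot>\<^sub>m (A * adj_mat A)"
    unfolding mat_inv_def using A adj_mat(1)[OF A] by (rule mult_smult_distrib)
  also have "\<dots> = (1 / det A) \<cdot>\<^sub>m (det A \<cdot>\<^sub>m 1\<^sub>m k)" using adj_mat(2)[OF A] by simp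
  also have "\<dots> = 1\<^sub>m k" using d by (intro eq_matI) auto
  finally show ?thesis .
qed

lemma mat_inv_right_entry:
  assumes A: "A \<in> carrier_mat k k" and d: "det A \<noteq> 0" and c: "c < k" and c': "c' < k"
  shows "(\<Sum>j<k. A $$ (c, j) * mat_inv A $$ (j, c')) = (if c = c' then 1 else 0)"
proof -
  have "(A * mat_inv A) $$ (c, c') = (\<Sum>j<k. A $$ (c, j) * mat_inv A $$ (j, c'))"
    using A mat_inv_carrier[OF A] c c' by (simp add: scalar_prod_def atLeast0LessThan)
  then show ?thesis using mat_inv_right[OF A d] c c' by simp
qed

lemma gm_add: "gm (\<lambda>\<alpha>. f \<alpha> + g \<alpha>) D = (\<lambda>i j. gm f D i j + gm g D i j)"
  unfolding gm_def by (simp add: fun_eq_iff)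

lemma suppB_lc: "(\<And>j. j \<in> BB D m \<Longrightarrow> suppB D m (t j)) \<Longrightarrow> suppB D m (lc D m x t)"
  unfolding suppB_def lc_def by (metis (mono_tags, lifting) mult_zero_right sum.neutral)

lemma evp_add: "evp D N (\<lambda>i. p i + q i) x = evp D N p x + evp D N q x"
  unfolding evp_def by (simp add: algebra_simps sum.distrib)

lemma evp_lc: "evp D N (lc D m y t) x = (\<Sum>j\<in>BB D m. y j * evp D N (t j) x)"
  unfolding evp_def lc_def by (simp add: sum_distrib_left sum_distrib_right mult.assoc) (rule sum.swap)

context
  fixes D :: nat and mom :: "nat list \<Rightarrow> complex" and I :: "real set"
    and \<gamma> :: "real \<Rightarrow> nat \<Rightarrow> real" and w :: "real \<Rightarrow> complex"
    and S Sh :: "nat \<Rightarrow> nat \<Rightarrow> complex mat" and H Hh :: "nat \<Rightarrow> complex mat" and n :: nat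
  assumes qd: "quasi_definite mom D"
    and fact: "block_LDL mom D S H"
    and integ: "\<And>\<alpha>. set_integrable lborel I (\<lambda>s. monev \<alpha> (cpt \<gamma> s) * w s)"
    and qdh: "quasi_definite (\<lambda>\<alpha>. mom \<alpha> + mvf I \<gamma> w \<alpha>) D"
    and facth: "block_LDL (\<lambda>\<alpha>. mom \<alpha> + mvf I \<gamma> w \<alpha>) D Sh Hh"
    and n1: "n \<ge> 1"
begin

lemma Hcar: "H m \<in> carrier_mat (bsz D m) (bsz D m)"
  using fact unfolding block_LDL_def by blast

lemma Hhcar: "Hh m \<in> carrier_mat (bsz D m) (bsz D m)"
  using facth unfolding block_LDL_def by blast

lemma UTs: "UT D (sv D S)" by (rule UT_sv[OF fact])
lemma UTsh: "UT D (sv D Sh)" by (rule UT_sv[OF facth])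

lemma LDLu: "k < Suc n \<Longrightarrow> l < Suc n \<Longrightarrow> a < bsz D k \<Longrightarrow> b < bsz D l \<Longrightarrow>
   bf D (Suc n) (gm mom D) (sv D S (k,a)) (sv D S (l,b)) = (if k = l then H k $$ (a, b) else 0)"
  by (rule LDL_bf[OF fact])

lemma LDLh: "k < Suc n \<Longrightarrow> l < Suc n \<Longrightarrow> a < bsz D k \<Longrightarrow> b < bsz D l \<Longrightarrow>
   bf D (Suc n) (gm (\<lambda>\<alpha>. mom \<alpha> + mvf I \<gamma> w \<alpha>) D) (sv D Sh (k,a)) (sv D Sh (l,b)) = (if k = l then Hh k $$ (a, b) else 0)"
  by (rule LDL_bf[OF facth])

lemma bf_h: "bf D (Suc n) (gm (\<lambda>\<alpha>. mom \<alpha> + mvf I \<gamma> w \<alpha>) D) p q =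
   bf D (Suc n) (gm mom D) p q + bf D (Suc n) (gm (mvf I \<gamma> w) D) p q"
  unfolding gm_add by (rule bf_add_g)

lemma H_det: assumes m: "m \<le> n" shows "det (H m) \<noteq> 0"
proof
  assume "det (H m) = 0"
  then obtain y where y: "y \<in> carrier_vec (bsz D m)" "y \<noteq> 0\<^sub>v (bsz D m)" "H m *\<^sub>v y = 0\<^sub>v (bsz D m)"
    using det_0_iff_vec_prod_zero_field[OF Hcar] by blast
  define x where "x = (\<lambda>i. if fst i = m \<and> snd i < bsz D m then y $ snd i else 0)"
  define p where "p = lc D (Suc m) x (sv D S)"
  have lcm: "lc D m x (sv D S) i = 0" for i
    unfolding lc_def x_def by (intro sum.neutral) (auto simp: mem_BB)
  have bfp: "bf D (Suc n) (gm mom D) (sv D S j) p = 0" if j: "j \<in> BB D (Suc m)" for j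
  proof -
    obtain k b where jj: "j = (k,b)" by (cases j)
    have kb: "k \<le> m" "b < bsz D k" using j jj by auto
    have "bf D (Suc n) (gm mom D) (sv D S j) p =
        (\<Sum>i\<in>BB D (Suc m). x i * bf D (Suc n) (gm mom D) (sv D S j) (sv D S i))"
      unfolding p_def bf_lc_right ..
    also have "\<dots> = (\<Sum>c<bsz D m. y $ c * bf D (Suc n) (gm mom D) (sv D S (k,b)) (sv D S (m,c)))"
      unfolding sum_BB_Suc jj by (simp add: x_def, intro sum.neutral, auto simp: mem_BB)
    also have "\<dots> = (\<Sum>c<bsz D m. y $ c * (if k = m then H k $$ (b, c) else 0))"
      using kb m by (intro sum.cong refl, subst LDLu) auto
    also have "\<dots> = 0"
    proof (cases "k = m")
      case True
      have "(H m *\<^sub>v y) $ b = 0" using y(3) kb True by simp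
      then have "(\<Sum>c<bsz D m. H m $$ (b, c) * y $ c) = 0"
        using Hcar[of m] y(1) kb True by (simp add: scalar_prod_def atLeast0LessThan)
      then show ?thesis using True by (simp add: mult.commute)
    qed simp
    finally show ?thesis .
  qed
  have sp: "suppB D (Suc m) p" unfolding p_def
    by (rule suppB_lc) (auto intro: suppB_sv simp: mem_BB)
  have "p = (\<lambda>_. 0)"
    by (rule nondeg[OF qd UTs _ sp bfp]) (use m in auto)
  then have "x i = 0" if "i \<in> BB D (Suc m)" for i
    using indep_lemma[OF UTs _ that] unfolding p_def by blast
  then have "y $ c = 0" if "c < bsz D m" for c
    using that by (metis (mono_tags, lifting) fst_conv lessI mem_BB_pair snd_conv x_def)
  then have "y = 0\<^sub>v (bsz D m)" using y(1) by (intro eq_vecI) auto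
  then show False using y(2) by simp
qed


abbreviation "gu \<equiv> gm mom D"
abbreviation "gv \<equiv> gm (mvf I \<gamma> w) D"
abbreviation "gh \<equiv> gm (\<lambda>\<alpha>. mom \<alpha> + mvf I \<gamma> w \<alpha>) D"

lemma orth_sh:
  assumes a: "a < bsz D n" and sq: "suppB D n q"
  shows "bf D (Suc n) gh (sv D Sh (n,a)) q = 0"
proof (rule orth_ext[OF UTsh sq])
  fix j assume j: "j \<in> BB D n"
  obtain k b where jj: "j = (k,b)" by (cases j)
  show "bf D (Suc n) gh (sv D Sh (n, a)) (sv D Sh j) = 0"
    using j a unfolding jj by (subst LDLh) auto
qed

lemma decomp: "\<exists>X. \<forall>a<bsz D n. sv D Sh (n,a) = (\<lambda>i. sv D S (n,a) i + lc D n (X a) (sv D S) i)"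
proof -
  have "\<exists>x. a < bsz D n \<longrightarrow> sv D Sh (n,a) = (\<lambda>i. sv D S (n,a) i + lc D n x (sv D S) i)" for a
  proof (cases "a < bsz D n")
    case True
    define d where "d = (\<lambda>i. sv D Sh (n,a) i - sv D S (n,a) i)"
    have "suppB D n d" unfolding suppB_def
    proof (intro allI impI)
      fix i assume nz: "d i \<noteq> 0"
      obtain j b where ii: "i = (j,b)" by (cases i)
      have jb: "j \<le> n" "b < bsz D j" using nz unfolding d_def ii sv_def by (auto split: if_splits)
      have "j \<noteq> n"
      proof
        assume "j = n"
        then have "d i = 0" using facth fact True jb unfolding d_def ii sv_def block_LDL_def by auto
        then show False using nz by simp
      qed
      then show "i \<in> BB D n" using jb ii by simp
    qed
    then obtain x where "d = lc D n x (sv D S)" using span_lemma[OF UTs] by blast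
    then have "sv D Sh (n,a) = (\<lambda>i. sv D S (n,a) i + lc D n x (sv D S) i)"
      unfolding d_def by (metis diff_add_cancel add.commute)
    then show ?thesis by blast
  qed simp
  then show ?thesis by metis
qed

lemma sum_delta_blk:
  fixes f g :: "nat \<Rightarrow> nat \<Rightarrow> complex"
  assumes "(m::nat) < n"
  shows "(\<Sum>k<n. \<Sum>c<bsz D k. f k c * (if k = m then g k c else 0)) = (\<Sum>c<bsz D m. f m c * g m c)"
proof -
  have "(\<Sum>c<bsz D k. f k c * (if k = m then g k c else 0)) = (if k = m then (\<Sum>c<bsz D m. f m c * g m c) else 0)" for k
    by (cases "k = m") simp_all
  then show ?thesis using assms by simp
qed

context
  fixes X :: "nat \<Rightarrow> nat \<times> nat \<Rightarrow> complex"
  assumes X: "\<forall>a<bsz D n. sv D Sh (n,a) = (\<lambda>i. sv D S (n,a) i + lc D n (X a) (sv D S) i)"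
begin

lemma E2:
  assumes a: "a < bsz D n" and j': "j' \<in> BB D n"
  shows "bf D (Suc n) gh (sv D S (n,a)) (sv D S j') + (\<Sum>j\<in>BB D n. X a j * bf D (Suc n) gh (sv D S j) (sv D S j')) = 0"
proof -
  have "bf D (Suc n) gh (sv D Sh (n,a)) (sv D S j') = 0"
    using j' by (intro orth_sh a suppB_sv') (auto simp: mem_BB)
  then show ?thesis using X a by (simp add: bf_add_left bf_lc_left)
qed

lemma E1:
  assumes a: "a < bsz D n" and m: "m < n" and c': "c' < bsz D m"
  shows "(\<Sum>c<bsz D m. X a (m,c) * H m $$ (c, c')) = - bf D (Suc n) gv (sv D Sh (n,a)) (sv D S (m,c'))"
proof -
  have "bf D (Suc n) gh (sv D Sh (n,a)) (sv D S (m,c')) = 0"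
    using m by (intro orth_sh a suppB_sv) auto
  then have 1: "bf D (Suc n) gu (sv D Sh (n,a)) (sv D S (m,c')) = - bf D (Suc n) gv (sv D Sh (n,a)) (sv D S (m,c'))"
    unfolding bf_h by (simp add: eq_neg_iff_add_eq_0)
  have "bf D (Suc n) gu (sv D Sh (n,a)) (sv D S (m,c')) =
      bf D (Suc n) gu (sv D S (n,a)) (sv D S (m,c')) + (\<Sum>j\<in>BB D n. X a j * bf D (Suc n) gu (sv D S j) (sv D S (m,c')))"
    using X a by (simp add: bf_add_left bf_lc_left)
  also have "bf D (Suc n) gu (sv D S (n,a)) (sv D S (m,c')) = 0"
    using a m c' by (subst LDLu) auto
  also have "(\<Sum>j\<in>BB D n. X a j * bf D (Suc n) gu (sv D S j) (sv D S (m,c'))) =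
      (\<Sum>k<n. \<Sum>c<bsz D k. X a (k,c) * (if k = m then H k $$ (c, c') else 0))"
    unfolding sum_BB using m c' by (intro sum.cong refl, subst LDLu) auto
  also have "\<dots> = (\<Sum>c<bsz D m. X a (m,c) * H m $$ (c, c'))"
    by (rule sum_delta_blk[OF m])
  finally show ?thesis using 1 by simp
qed

lemma Kern_expand:
  "Kern D S H n y x = (\<Sum>m<n. \<Sum>c<bsz D m. \<Sum>c'<bsz D m.
      Pb D S m y $$ (c, 0) * mat_inv (H m) $$ (c, c') * Pb D S m x $$ (c', 0))"
  unfolding Kern_def
proof (intro sum.cong refl)
  fix m
  have Hi: "mat_inv (H m) \<in> carrier_mat (bsz D m) (bsz D m)" by (rule mat_inv_carrier[OF Hcar])
  have "(transpose_mat (Pb D S m y) * mat_inv (H m) * Pb D S m x) $$ (0, 0) =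
     (\<Sum>c'<bsz D m. (\<Sum>c<bsz D m. Pb D S m y $$ (c, 0) * mat_inv (H m) $$ (c, c')) * Pb D S m x $$ (c', 0))"
    using Hi by (simp add: Pb_def scalar_prod_def atLeast0LessThan)
  also have "\<dots> = (\<Sum>c<bsz D m. \<Sum>c'<bsz D m. Pb D S m y $$ (c, 0) * mat_inv (H m) $$ (c, c') * Pb D S m x $$ (c', 0))"
    by (simp add: sum_distrib_right) (rule sum.swap)
  finally show "(transpose_mat (Pb D S m y) * mat_inv (H m) * Pb D S m x) $$ (0, 0) =
     (\<Sum>c<bsz D m. \<Sum>c'<bsz D m. Pb D S m y $$ (c, 0) * mat_inv (H m) $$ (c, c') * Pb D S m x $$ (c', 0))" .
qed

lemma X_formula:
  assumes a: "a < bsz D n" and m: "m < n" and c'': "c'' < bsz D m"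
  shows "X a (m,c'') = - (\<Sum>c'<bsz D m. bf D (Suc n) gv (sv D Sh (n,a)) (sv D S (m,c')) * mat_inv (H m) $$ (c', c''))"
proof -
  have dH: "det (H m) \<noteq> 0" using H_det m by simp
  have "(\<Sum>c'<bsz D m. (\<Sum>c<bsz D m. X a (m,c) * H m $$ (c, c')) * mat_inv (H m) $$ (c', c''))
      = (\<Sum>c<bsz D m. X a (m,c) * (\<Sum>c'<bsz D m. H m $$ (c, c') * mat_inv (H m) $$ (c', c'')))"
    by (simp add: sum_distrib_left sum_distrib_right mult.assoc) (rule sum.swap)
  also have "\<dots> = (\<Sum>c<bsz D m. X a (m,c) * (if c = c'' then 1 else 0))"
    using c'' by (intro sum.cong refl) (simp add: mat_inv_right_entry[OF Hcar dH])
  also have "\<dots> = X a (m,c'')" using c'' by (simp add: if_distrib cong: if_cong)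
  finally have "X a (m,c'') = (\<Sum>c'<bsz D m. (\<Sum>c<bsz D m. X a (m,c) * H m $$ (c, c')) * mat_inv (H m) $$ (c', c''))" ..
  also have "\<dots> = (\<Sum>c'<bsz D m. (- bf D (Suc n) gv (sv D Sh (n,a)) (sv D S (m,c'))) * mat_inv (H m) $$ (c', c''))"
    using a m by (intro sum.cong refl) (simp add: E1)
  finally show ?thesis by (simp add: sum_negf)
qed

lemma claim2_entry:
  assumes a: "a < bsz D n"
  shows "Pb D Sh n x $$ (a, 0) = Pb D S n x $$ (a, 0) -
     (LINT s:I|lborel. Pb D Sh n (cpt \<gamma> s) $$ (a, 0) * Kern D S H n (cpt \<gamma> s) x * w s)"
proof -
  let ?P = "\<lambda>m c x. Pb D S m x $$ (c, 0)"
  let ?Hi = "\<lambda>m. mat_inv (H m)"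
  let ?J = "\<lambda>m c. bf D (Suc n) gv (sv D Sh (n,a)) (sv D S (m,c))"
  define F where "F = (\<lambda>m c s. Pb D Sh n (cpt \<gamma> s) $$ (a, 0) * ?P m c (cpt \<gamma> s) * w s)"
  have Fev: "F m c s = evp D (Suc n) (sv D Sh (n,a)) (cpt \<gamma> s) * evp D (Suc n) (sv D S (m,c)) (cpt \<gamma> s) * w s"
    if "m < n" "c < bsz D m" for m c s
    unfolding F_def using that a by (simp add: Pb_evp[where N="Suc n"])
  have int0: "set_integrable lborel I (F m c)" if "m < n" "c < bsz D m" for m c
    using bf_integral(1)[OF integ] Fev[OF that] by presburger
  have LF: "(LINT s:I|lborel. F m c s) = ?J m c" if "m < n" "c < bsz D m" for m c
    using bf_integral(2)[OF integ] Fev[OF that] by presburger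
  have int1: "set_integrable lborel I (\<lambda>s. (?Hi m $$ (c,c') * ?P m c' x) * F m c s)"
    if "m < n" "c < bsz D m" for m c c'
    using int0[OF that] by simp
  have int2: "set_integrable lborel I (\<lambda>s. \<Sum>c'<bsz D m. (?Hi m $$ (c,c') * ?P m c' x) * F m c s)"
    if "m < n" "c < bsz D m" for m c
    by (rule set_integral_sum'(1)) (use int1 that in auto)
  have int3: "set_integrable lborel I (\<lambda>s. \<Sum>c<bsz D m. \<Sum>c'<bsz D m. (?Hi m $$ (c,c') * ?P m c' x) * F m c s)"
    if "m < n" for m
    by (rule set_integral_sum'(1)) (use int2 that in auto)
  have pw: "Pb D Sh n (cpt \<gamma> s) $$ (a, 0) * Kern D S H n (cpt \<gamma> s) x * w s =
      (\<Sum>m<n. \<Sum>c<bsz D m. \<Sum>c'<bsz D m. (?Hi m $$ (c,c') * ?P m c' x) * F m c s)" for s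
    unfolding Kern_expand F_def by (simp add: sum_distrib_left sum_distrib_right ac_simps)
  have "(LINT s:I|lborel. Pb D Sh n (cpt \<gamma> s) $$ (a, 0) * Kern D S H n (cpt \<gamma> s) x * w s) =
     (\<Sum>m<n. LINT s:I|lborel. \<Sum>c<bsz D m. \<Sum>c'<bsz D m. (?Hi m $$ (c,c') * ?P m c' x) * F m c s)"
    unfolding pw by (rule set_integral_sum'(2)) (use int3 in auto)
  also have "\<dots> = (\<Sum>m<n. \<Sum>c<bsz D m. LINT s:I|lborel. \<Sum>c'<bsz D m. (?Hi m $$ (c,c') * ?P m c' x) * F m c s)"
    by (intro sum.cong refl set_integral_sum'(2)) (use int2 in auto)
  also have "\<dots> = (\<Sum>m<n. \<Sum>c<bsz D m. \<Sum>c'<bsz D m. LINT s:I|lborel. (?Hi m $$ (c,c') * ?P m c' x) * F m c s)"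
    by (intro sum.cong refl set_integral_sum'(2)) (use int1 in auto)
  also have "\<dots> = (\<Sum>m<n. \<Sum>c<bsz D m. \<Sum>c'<bsz D m. (?Hi m $$ (c,c') * ?P m c' x) * ?J m c)"
    by (intro sum.cong refl) (simp add: LF)
  finally have I1: "(LINT s:I|lborel. Pb D Sh n (cpt \<gamma> s) $$ (a, 0) * Kern D S H n (cpt \<gamma> s) x * w s) =
     (\<Sum>m<n. \<Sum>c<bsz D m. \<Sum>c'<bsz D m. (?Hi m $$ (c,c') * ?P m c' x) * ?J m c)" .
  have "Pb D Sh n x $$ (a, 0) = evp D (Suc n) (sv D Sh (n,a)) x"
    using a by (simp add: Pb_evp[where N="Suc n"])
  also have "\<dots> = evp D (Suc n) (sv D S (n,a)) x + (\<Sum>j\<in>BB D n. X a j * evp D (Suc n) (sv D S j) x)"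
    using X a by (simp add: evp_add evp_lc)
  also have "evp D (Suc n) (sv D S (n,a)) x = ?P n a x"
    using a by (simp add: Pb_evp[where N="Suc n"])
  also have "(\<Sum>j\<in>BB D n. X a j * evp D (Suc n) (sv D S j) x) = (\<Sum>m<n. \<Sum>c''<bsz D m. X a (m,c'') * ?P m c'' x)"
    unfolding sum_BB by (intro sum.cong refl) (simp add: Pb_evp[where N="Suc n"])
  also have "\<dots> = (\<Sum>m<n. \<Sum>c''<bsz D m. - (\<Sum>c'<bsz D m. ?J m c' * ?Hi m $$ (c', c'')) * ?P m c'' x)"
    using a by (intro sum.cong refl) (simp add: X_formula)
  also have "\<dots> = - (\<Sum>m<n. \<Sum>c<bsz D m. \<Sum>c'<bsz D m. (?Hi m $$ (c,c') * ?P m c' x) * ?J m c)"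
  proof -
    have "(\<Sum>c''<bsz D m. - (\<Sum>c'<bsz D m. ?J m c' * ?Hi m $$ (c', c'')) * ?P m c'' x) =
        - (\<Sum>c<bsz D m. \<Sum>c'<bsz D m. (?Hi m $$ (c,c') * ?P m c' x) * ?J m c)" for m
    proof -
      have "(\<Sum>c''<bsz D m. - (\<Sum>c'<bsz D m. ?J m c' * ?Hi m $$ (c', c'')) * ?P m c'' x) =
          - (\<Sum>c''<bsz D m. \<Sum>c'<bsz D m. (?Hi m $$ (c',c'') * ?P m c'' x) * ?J m c')"
        by (simp add: sum_distrib_left sum_distrib_right sum_negf ac_simps)
      also have "\<dots> = - (\<Sum>c<bsz D m. \<Sum>c'<bsz D m. (?Hi m $$ (c,c') * ?P m c' x) * ?J m c)"
        by (subst sum.swap) simp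
      finally show ?thesis .
    qed
    then show ?thesis by (simp add: sum_negf)
  qed
  finally show ?thesis unfolding I1 by simp
qed

lemma claim2: "Pb D Sh n x = Pb D S n x - mat (bsz D n) 1 (\<lambda>(a, _). LINT s:I|lborel.
     Pb D Sh n (cpt \<gamma> s) $$ (a, 0) * Kern D S H n (cpt \<gamma> s) x * w s)"
  by (rule eq_matI) (auto simp: Pb_def[of D Sh n x] claim2_entry[symmetric])

lemma claim3:
  "Hh n = H n + mat (bsz D n) (bsz D n)
     (\<lambda>(a, b). LINT s:I|lborel. Pb D Sh n (cpt \<gamma> s) $$ (a, 0) * Pb D S n (cpt \<gamma> s) $$ (b, 0) * w s)"
proof (rule eq_matI)
  show "dim_row (Hh n) = dim_row (H n + mat (bsz D n) (bsz D n) (\<lambda>(a, b). LINT s:I|lborel. Pb D Sh n (cpt \<gamma> s) $$ (a, 0) * Pb D S n (cpt \<gamma> s) $$ (b, 0) * w s))"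
    using Hhcar[of n] by simp
  show "dim_col (Hh n) = dim_col (H n + mat (bsz D n) (bsz D n) (\<lambda>(a, b). LINT s:I|lborel. Pb D Sh n (cpt \<gamma> s) $$ (a, 0) * Pb D S n (cpt \<gamma> s) $$ (b, 0) * w s))"
    using Hhcar[of n] by simp
  fix a b assume ab: "a < dim_row (H n + mat (bsz D n) (bsz D n) (\<lambda>(a, b). LINT s:I|lborel. Pb D Sh n (cpt \<gamma> s) $$ (a, 0) * Pb D S n (cpt \<gamma> s) $$ (b, 0) * w s))"
     "b < dim_col (H n + mat (bsz D n) (bsz D n) (\<lambda>(a, b). LINT s:I|lborel. Pb D Sh n (cpt \<gamma> s) $$ (a, 0) * Pb D S n (cpt \<gamma> s) $$ (b, 0) * w s))"
  then have a: "a < bsz D n" and b: "b < bsz D n" by auto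
  have "Hh n $$ (a, b) = bf D (Suc n) gh (sv D Sh (n,a)) (sv D Sh (n,b))"
    using a b by (subst LDLh) auto
  also have "\<dots> = bf D (Suc n) gh (sv D Sh (n,a)) (sv D S (n,b)) + bf D (Suc n) gh (sv D Sh (n,a)) (lc D n (X b) (sv D S))"
    using X b by (simp add: bf_add_right)
  also have "bf D (Suc n) gh (sv D Sh (n,a)) (lc D n (X b) (sv D S)) = 0"
    by (intro orth_sh a suppB_lc suppB_sv') (auto simp: mem_BB)
  also have "bf D (Suc n) gh (sv D Sh (n,a)) (sv D S (n,b)) =
      bf D (Suc n) gu (sv D Sh (n,a)) (sv D S (n,b)) + bf D (Suc n) gv (sv D Sh (n,a)) (sv D S (n,b))"
    by (rule bf_h)
  also have "bf D (Suc n) gu (sv D Sh (n,a)) (sv D S (n,b)) = H n $$ (a, b)"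
  proof -
    have "bf D (Suc n) gu (sv D Sh (n,a)) (sv D S (n,b)) =
      bf D (Suc n) gu (sv D S (n,a)) (sv D S (n,b)) + (\<Sum>j\<in>BB D n. X a j * bf D (Suc n) gu (sv D S j) (sv D S (n,b)))"
      using X a by (simp add: bf_add_left bf_lc_left)
    also have "(\<Sum>j\<in>BB D n. X a j * bf D (Suc n) gu (sv D S j) (sv D S (n,b))) = 0"
    proof (intro sum.neutral ballI)
      fix j assume j: "j \<in> BB D n"
      obtain k c where jj: "j = (k,c)" by (cases j)
      show "X a j * bf D (Suc n) gu (sv D S j) (sv D S (n,b)) = 0"
        using j b unfolding jj by (subst LDLu) auto
    qed
    also have "bf D (Suc n) gu (sv D S (n,a)) (sv D S (n,b)) = H n $$ (a, b)"
      using a b by (subst LDLu) auto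
    finally show ?thesis by simp
  qed
  also have "bf D (Suc n) gv (sv D Sh (n,a)) (sv D S (n,b)) =
     (LINT s:I|lborel. Pb D Sh n (cpt \<gamma> s) $$ (a, 0) * Pb D S n (cpt \<gamma> s) $$ (b, 0) * w s)"
    unfolding bf_integral(2)[OF integ] using a b by (simp add: Pb_evp[where N="Suc n"])
  finally show "Hh n $$ (a, b) = (H n + mat (bsz D n) (bsz D n) (\<lambda>(a, b). LINT s:I|lborel. Pb D Sh n (cpt \<gamma> s) $$ (a, 0) * Pb D S n (cpt \<gamma> s) $$ (b, 0) * w s)) $$ (a, b)"
    using a b Hcar[of n] by simp
qed


lemma Qlemma:
  assumes i: "i \<in> BB D (Suc n)" and j: "j \<in> BB D (Suc n)"
  shows "(if fst i = fst j then H (fst i) $$ (snd i, snd j) else 0) +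
     mat (bsz D (fst i)) (bsz D (fst j)) (\<lambda>(a, b). LINT s:I|lborel. Pb D S (fst i) (cpt \<gamma> s) $$ (a, 0) * Pb D S (fst j) (cpt \<gamma> s) $$ (b, 0) * w s) $$ (snd i, snd j)
    = bf D (Suc n) gh (sv D S i) (sv D S j)"
proof -
  obtain k a where ii: "i = (k,a)" by (cases i)
  obtain l b where jj: "j = (l,b)" by (cases j)
  have k: "k < Suc n" "a < bsz D k" and l: "l < Suc n" "b < bsz D l" using i j ii jj by auto
  have f1: "mat (bsz D k) (bsz D l) (\<lambda>(a, b). LINT s:I|lborel. Pb D S k (cpt \<gamma> s) $$ (a, 0) * Pb D S l (cpt \<gamma> s) $$ (b, 0) * w s) $$ (a, b)
     = bf D (Suc n) gv (sv D S (k,a)) (sv D S (l,b))"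
    unfolding bf_integral(2)[OF integ] using k l by (simp add: Pb_evp[where N="Suc n"])
  have f2: "(if k = l then H k $$ (a, b) else 0) = bf D (Suc n) gu (sv D S (k,a)) (sv D S (l,b))"
    using k l by (simp add: LDLu)
  show ?thesis unfolding ii jj fst_conv snd_conv bf_h f1 f2 ..
qed

lemma off_Suc: "off D (Suc m) = off D m + bsz D m"
  unfolding off_def by simp

lemma claim1:
  fixes t :: real
  defines "A \<equiv> (\<lambda>l m. mat (bsz D l) (bsz D m) (\<lambda>(a, b). LINT s:I|lborel. Pb D S l (cpt \<gamma> s) $$ (a, 0) * Pb D S m (cpt \<gamma> s) $$ (b, 0) * w s))"
  defines "M \<equiv> mat (off D (Suc n)) (off D n + 1) (\<lambda>(r, c). case idx D (Suc n) ! r of (k, a) \<Rightarrow>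
                  (if c < off D n then
                     (case idx D n ! c of (l, b) \<Rightarrow>
                        (if k = l then H k $$ (a, b) else 0) + A k l $$ (a, b))
                   else Pb D S k (cpt \<gamma> t) $$ (a, 0)))"
  shows "Pb D Sh n (cpt \<gamma> t) = Theta_star M (bsz D n) 1"
proof -
  let ?o = "off D n" and ?b = "bsz D n"
  let ?ix = "idx D n" and ?iy = "idx D (Suc n)"
  have dimM: "dim_row M = ?o + ?b" "dim_col M = ?o + 1" unfolding M_def by (auto simp: off_Suc)
  have ME1: "M $$ (r, c) = bf D (Suc n) gh (sv D S (?iy ! r)) (sv D S (?ix ! c))"
    if r: "r < ?o + ?b" and c: "c < ?o" for r c
  proof -
    have ry: "?iy ! r \<in> BB D (Suc n)" using r by (intro idx_in_BB) (simp add: off_Suc)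
    have cx: "?ix ! c \<in> BB D (Suc n)" using idx_in_BB[OF c] by (auto simp: mem_BB)
    have "M $$ (r, c) = (if fst (?iy ! r) = fst (?ix ! c) then H (fst (?iy ! r)) $$ (snd (?iy ! r), snd (?ix ! c)) else 0) +
       A (fst (?iy ! r)) (fst (?ix ! c)) $$ (snd (?iy ! r), snd (?ix ! c))"
      unfolding M_def using r c by (simp add: off_Suc split: prod.split)
    then show ?thesis using Qlemma[OF ry cx] unfolding A_def by simp
  qed
  have ME2: "M $$ (r, ?o) = evp D (Suc n) (sv D S (?iy ! r)) (cpt \<gamma> t)"
    if r: "r < ?o + ?b" for r
  proof -
    have ry: "?iy ! r \<in> BB D (Suc n)" using r by (intro idx_in_BB) (simp add: off_Suc)
    have "M $$ (r, ?o) = Pb D S (fst (?iy ! r)) (cpt \<gamma> t) $$ (snd (?iy ! r), 0)"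
      unfolding M_def using r by (simp add: off_Suc split: prod.split)
    then show ?thesis using ry by (simp add: Pb_evp[where N="Suc n"] mem_BB)
  qed
  define Am where "Am = mat ?o ?o (\<lambda>ij. M $$ ij)"
  define Bm where "Bm = mat ?o 1 (\<lambda>(i, j). M $$ (i, j + ?o))"
  define Cm where "Cm = mat ?b ?o (\<lambda>(i, j). M $$ (i + ?o, j))"
  define Dm where "Dm = mat ?b 1 (\<lambda>(i, j). M $$ (i + ?o, j + ?o))"
  have Th: "Theta_star M ?b 1 = Dm - Cm * mat_inv Am * Bm"
    unfolding Theta_star_def split_block_def Let_def dimM Am_def Bm_def Cm_def Dm_def by simp
  have Am: "Am \<in> carrier_mat ?o ?o" unfolding Am_def by simp
  have Aent: "Am $$ (r, c) = bf D (Suc n) gh (sv D S (?ix ! r)) (sv D S (?ix ! c))" if "r < ?o" "c < ?o" for r c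
    unfolding Am_def using that by (simp add: ME1 idx_Suc_lo)
  have Bent: "Bm $$ (r, 0) = evp D (Suc n) (sv D S (?ix ! r)) (cpt \<gamma> t)" if "r < ?o" for r
    unfolding Bm_def using that by (simp add: ME2 idx_Suc_lo)
  have Cent: "Cm $$ (a, c) = bf D (Suc n) gh (sv D S (n,a)) (sv D S (?ix ! c))" if "a < ?b" "c < ?o" for a c
    unfolding Cm_def using that ME1[of "a + ?o" c] idx_Suc_hi[of a D n] by (simp add: add.commute)
  have Dent: "Dm $$ (a, 0) = evp D (Suc n) (sv D S (n,a)) (cpt \<gamma> t)" if "a < ?b" for a
    unfolding Dm_def using that ME2[of "a + ?o"] idx_Suc_hi[of a D n] by (simp add: add.commute)
  have bijx: "bij_betw ((!) ?ix) {..<?o} (BB D n)" by (rule bij_idx)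
  have detA: "det Am \<noteq> 0"
  proof
    assume "det Am = 0"
    then obtain v where v: "v \<in> carrier_vec ?o" "v \<noteq> 0\<^sub>v ?o" "Am *\<^sub>v v = 0\<^sub>v ?o"
      using det_0_iff_vec_prod_zero_field[OF Am] by blast
    define g where "g = the_inv_into {..<?o} ((!) ?ix)"
    have gf: "g (?ix ! r) = r" if "r < ?o" for r
      unfolding g_def using bijx that by (simp add: bij_betw_def the_inv_into_f_f)
    define x where "x = (\<lambda>i. v $ g i)"
    define p where "p = lc D n x (sv D S)"
    have bfp: "bf D (Suc n) gh (sv D S i) p = 0" if i: "i \<in> BB D (Suc (n - 1))" for i
    proof -
      have iB: "i \<in> BB D n" using i n1 by simp
      then obtain r0 where r0: "r0 < ?o" "?ix ! r0 = i" using BB_idx by blast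
      have "bf D (Suc n) gh (sv D S i) p = (\<Sum>j\<in>BB D n. x j * bf D (Suc n) gh (sv D S i) (sv D S j))"
        unfolding p_def bf_lc_right ..
      also have "\<dots> = (\<Sum>r<?o. x (?ix ! r) * bf D (Suc n) gh (sv D S i) (sv D S (?ix ! r)))"
        by (rule sum_idx[symmetric])
      also have "\<dots> = (\<Sum>r<?o. Am $$ (r0, r) * v $ r)"
        using r0 by (intro sum.cong refl) (simp add: x_def gf Aent mult.commute)
      also have "\<dots> = (Am *\<^sub>v v) $ r0"
        using r0 Am v(1) by (simp add: scalar_prod_def atLeast0LessThan)
      also have "\<dots> = 0" using v(3) r0 by simp
      finally show ?thesis .
    qed
    have sp0: "suppB D n p" unfolding p_def
      by (intro suppB_lc suppB_sv') (auto simp: mem_BB)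
    have sp: "suppB D (Suc (n - 1)) p" using sp0 n1 by simp
    have "p = (\<lambda>_. 0)"
      by (rule nondeg[OF qdh UTs _ sp bfp]) simp
    then have "x j = 0" if "j \<in> BB D n" for j
      using indep_lemma[OF UTs _ that] unfolding p_def by blast
    then have "v $ r = 0" if "r < ?o" for r
      using that idx_in_BB[OF that] gf[OF that] unfolding x_def by metis
    then have "v = 0\<^sub>v ?o" using v(1) by (intro eq_vecI) auto
    then show False using v(2) by simp
  qed
  define Xm where "Xm = mat ?b ?o (\<lambda>(a, r). X a (?ix ! r))"
  have Xm: "Xm \<in> carrier_mat ?b ?o" unfolding Xm_def by simp
  have CX: "Cm = - (Xm * Am)"
  proof (rule eq_matI)
    fix a c assume ac: "a < dim_row (- (Xm * Am))" "c < dim_col (- (Xm * Am))"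
    then have a: "a < ?b" and c: "c < ?o" using Xm Am by auto
    have "(Xm * Am) $$ (a, c) = (\<Sum>r<?o. X a (?ix ! r) * bf D (Suc n) gh (sv D S (?ix ! r)) (sv D S (?ix ! c)))"
      using a c Xm Am by (simp add: scalar_prod_def atLeast0LessThan Xm_def Aent)
    also have "\<dots> = (\<Sum>j\<in>BB D n. X a j * bf D (Suc n) gh (sv D S j) (sv D S (?ix ! c)))"
      by (rule sum_idx)
    also have "\<dots> = - Cm $$ (a, c)"
      using E2[OF a idx_in_BB[OF c]] Cent[OF a c] by (simp add: eq_neg_iff_add_eq_0 add.commute)
    finally show "Cm $$ (a, c) = (- (Xm * Am)) $$ (a, c)" using a c Xm Am by simp
  qed (use Xm Am in \<open>auto simp: Cm_def\<close>)
  have CMi: "Cm * mat_inv Am = - Xm"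
  proof -
    have "Cm * mat_inv Am = - (Xm * Am * mat_inv Am)" unfolding CX using Xm Am mat_inv_carrier[OF Am] by (intro uminus_mult_left_mat) auto
    also have "Xm * Am * mat_inv Am = Xm * (Am * mat_inv Am)"
      using Xm Am mat_inv_carrier[OF Am] by (rule assoc_mult_mat)
    also have "\<dots> = Xm" using mat_inv_right[OF Am detA] Xm by simp
    finally show ?thesis .
  qed
  show ?thesis
  proof (rule eq_matI)
    have dims: "dim_row (Theta_star M ?b 1) = ?b" "dim_col (Theta_star M ?b 1) = 1"
      unfolding Th by (simp_all add: Dm_def Cm_def Bm_def)
    show "dim_row (Pb D Sh n (cpt \<gamma> t)) = dim_row (Theta_star M ?b 1)"
      "dim_col (Pb D Sh n (cpt \<gamma> t)) = dim_col (Theta_star M ?b 1)"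
      unfolding dims by (simp_all add: Pb_def)
    fix a j assume aj: "a < dim_row (Theta_star M ?b 1)" "j < dim_col (Theta_star M ?b 1)"
    then have a: "a < ?b" and j: "j = 0" using dims by auto
    have "Theta_star M ?b 1 $$ (a, 0) = Dm $$ (a, 0) + (Xm * Bm) $$ (a, 0)"
      unfolding Th CMi using a Xm by (simp add: Dm_def Bm_def)
    also have "(Xm * Bm) $$ (a, 0) = (\<Sum>r<?o. X a (?ix ! r) * evp D (Suc n) (sv D S (?ix ! r)) (cpt \<gamma> t))"
    proof -
      have Bmc: "Bm \<in> carrier_mat ?o 1" unfolding Bm_def by simp
      show ?thesis using a Xm Bmc by (simp add: scalar_prod_def atLeast0LessThan Xm_def Bent)
    qed
    also have "\<dots> = (\<Sum>j\<in>BB D n. X a j * evp D (Suc n) (sv D S j) (cpt \<gamma> t))"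
      by (rule sum_idx)
    also have "Dm $$ (a, 0) + (\<Sum>j\<in>BB D n. X a j * evp D (Suc n) (sv D S j) (cpt \<gamma> t))
       = evp D (Suc n) (sv D Sh (n,a)) (cpt \<gamma> t)"
      using X a Dent[OF a] by (simp add: evp_add evp_lc)
    also have "\<dots> = Pb D Sh n (cpt \<gamma> t) $$ (a, 0)"
      using a by (simp add: Pb_evp[where N="Suc n"])
    finally show "Pb D Sh n (cpt \<gamma> t) $$ (a, j) = Theta_star M ?b 1 $$ (a, j)" using j by simp
  qed
qed
end

end


theorem mainTheorem17:
  fixes D :: nat
    and mom :: "nat list \<Rightarrow> complex"
    and I :: "real set"
    and \<gamma> :: "real \<Rightarrow> nat \<Rightarrow> real"
    and w :: "real \<Rightarrow> complex"
    and S Sh :: "nat \<Rightarrow> nat \<Rightarrow> complex mat"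
    and H Hh :: "nat \<Rightarrow> complex mat"
    and n :: nat
  assumes D: "D \<ge> 1"
    and qd: "quasi_definite mom D"
    and fact: "block_LDL mom D S H"
    and I: "is_interval I"
    and smooth: "smooth_curve D I \<gamma>"
    and integ: "\<And>\<alpha>. set_integrable lborel I (\<lambda>s. monev \<alpha> (cpt \<gamma> s) * w s)"
    and qdh: "quasi_definite (\<lambda>\<alpha>. mom \<alpha> + (LINT s:I|lborel. monev \<alpha> (cpt \<gamma> s) * w s)) D"
    and facth: "block_LDL (\<lambda>\<alpha>. mom \<alpha> + (LINT s:I|lborel. monev \<alpha> (cpt \<gamma> s) * w s)) D Sh Hh"
    and n: "n \<ge> 1"
  shows
   "let \<pi> = (\<lambda>m t. Pb D S m (cpt \<gamma> t));
        \<pi>h = (\<lambda>m t. Pb D Sh m (cpt \<gamma> t));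
        A = (\<lambda>l m. mat (bsz D l) (bsz D m)
               (\<lambda>(a, b). LINT s:I|lborel. \<pi> l s $$ (a, 0) * \<pi> m s $$ (b, 0) * w s));
        M = (\<lambda>t. mat (off D (Suc n)) (off D n + 1)
               (\<lambda>(r, c). case idx D (Suc n) ! r of (k, a) \<Rightarrow>
                  (if c < off D n then
                     (case idx D n ! c of (l, b) \<Rightarrow>
                        (if k = l then H k $$ (a, b) else 0) + A k l $$ (a, b))
                   else \<pi> k t $$ (a, 0))))
    in (\<forall>t\<in>I. \<pi>h n t = Theta_star (M t) (bsz D n) 1)
     \<and> (\<forall>x. Pb D Sh n x = Pb D S n x
            - mat (bsz D n) 1 (\<lambda>(a, _). LINT s:I|lborel.
                 \<pi>h n s $$ (a, 0) * Kern D S H n (cpt \<gamma> s) x * w s))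
     \<and> Hh n = H n + mat (bsz D n) (bsz D n)
            (\<lambda>(a, b). LINT s:I|lborel. \<pi>h n s $$ (a, 0) * \<pi> n s $$ (b, 0) * w s)"
  proof -
  have mv: "(\<lambda>\<alpha>. mom \<alpha> + (LINT s:I|lborel. monev \<alpha> (cpt \<gamma> s) * w s)) = (\<lambda>\<alpha>. mom \<alpha> + mvf I \<gamma> w \<alpha>)"
    by (simp add: mvf_def)
  have qdh': "quasi_definite (\<lambda>\<alpha>. mom \<alpha> + mvf I \<gamma> w \<alpha>) D" using qdh unfolding mv .
  have facth': "block_LDL (\<lambda>\<alpha>. mom \<alpha> + mvf I \<gamma> w \<alpha>) D Sh Hh" using facth unfolding mv .
  obtain X where X: "\<forall>a<bsz D n. sv D Sh (n,a) = (\<lambda>i. sv D S (n,a) i + lc D n (X a) (sv D S) i)"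
    using decomp[OF qd fact integ qdh' facth' n] by blast
  note c1 = claim1[OF qd fact integ qdh' facth' n X]
  note c2 = claim2[OF qd fact integ qdh' facth' n X]
  note c3 = claim3[OF qd fact integ qdh' facth' n X]
  show ?thesis unfolding Let_def using c1 c2 c3 by blast
qed

end
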